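(* Let $n\ge3$, let $H$ be a non-trivial finitely generated abelian group, let $G$ be a group with a surjective homomorphism $\sigma\colon G\to S_n$, let $W=H\wr_\sigma G$, and let $\pi\colon W\to G$ be the canonical projection. Assume that every abelian normal subgroup of $W$ is contained in $H^n$, and that $P_\sigma=\ker\sigma$ is characteristic in $G$. Then $PW=\pi^{-1}(P_\sigma)\cong H^n\times P_\sigma$ is characteristic in $W$.
   Context: $H\wr_\sigma G=H^n\rtimes_\sigma G$ is the semidirect product in which $G$ acts on $H^n$ by permuting coordinates through $\sigma$: $g\cdot(h_1,\dots,h_n)=(h_{\sigma(g)(1)},\dots,h_{\sigma(g)(n)})$ (with the composition convention in $S_n$ making this a left action); $H^n$ is identified with $\{(\mathbf h,1)\}$ and $\pi(\mathbf h,g)=g$. *)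

theory Defs
  imports "HOL-Algebra.Algebra"
begin

definition pow_group :: "('h, 'a) monoid_scheme \<Rightarrow> nat \<Rightarrow> (nat \<Rightarrow> 'h) monoid" where
  "pow_group H n =
     \<lparr> carrier = {1..n} \<rightarrow>\<^sub>E carrier H,
       monoid.mult = (\<lambda>h h'. \<lambda>i\<in>{1..n}. h i \<otimes>\<^bsub>H\<^esub> h' i),
       monoid.one = (\<lambda>i\<in>{1..n}. \<one>\<^bsub>H\<^esub>) \<rparr>"

text \<open>G acts on H^n on the left by (g.h)_i = h_(sigma(g)^-1(i)).\<close>
definition wreath :: "('h, 'a) monoid_scheme \<Rightarrow> ('g, 'b) monoid_scheme \<Rightarrow> nat
                       \<Rightarrow> ('g \<Rightarrow> nat \<Rightarrow> nat) \<Rightarrow> ((nat \<Rightarrow> 'h) \<times> 'g) monoid" where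
  "wreath H G n \<sigma> =
     \<lparr> carrier = ({1..n} \<rightarrow>\<^sub>E carrier H) \<times> carrier G,
       monoid.mult = (\<lambda>(h, g) (h', g').
                 ((\<lambda>i\<in>{1..n}. h i \<otimes>\<^bsub>H\<^esub> h' (inv_into UNIV (\<sigma> g) i)), g \<otimes>\<^bsub>G\<^esub> g')),
       monoid.one = ((\<lambda>i\<in>{1..n}. \<one>\<^bsub>H\<^esub>), \<one>\<^bsub>G\<^esub>) \<rparr>"

definition base_group :: "('h, 'a) monoid_scheme \<Rightarrow> ('g, 'b) monoid_scheme \<Rightarrow> nat
                          \<Rightarrow> ((nat \<Rightarrow> 'h) \<times> 'g) set" where
  "base_group H G n = ({1..n} \<rightarrow>\<^sub>E carrier H) \<times> {\<one>\<^bsub>G\<^esub>}"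

definition wr_proj :: "(nat \<Rightarrow> 'h) \<times> 'g \<Rightarrow> 'g" where
  "wr_proj = snd"

definition characteristic :: "('a, 'm) monoid_scheme \<Rightarrow> 'a set \<Rightarrow> bool" where
  "characteristic G K \<longleftrightarrow> subgroup K G \<and> (\<forall>\<phi> \<in> iso G G. \<phi> ` K = K)"

definition fin_gen_group :: "('a, 'm) monoid_scheme \<Rightarrow> bool" where
  "fin_gen_group G \<longleftrightarrow> (\<exists>S. finite S \<and> S \<subseteq> carrier G \<and> generate G S = carrier G)"

end

theory Submission imports Defs begin

locale wr =
  fixes H :: "('h, 'a) monoid_scheme" and G :: "('g, 'b) monoid_scheme"
    and n :: nat and \<sigma> :: "'g \<Rightarrow> nat \<Rightarrow> nat"
  assumes H: "group H" and G: "group G" and sh: "\<sigma> \<in> hom G (sym_group n)"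
begin

abbreviation "W \<equiv> wreath H G n \<sigma>"
abbreviation "\<tau> g \<equiv> inv_into UNIV (\<sigma> g)"

lemma W_carrier: "carrier W = ({1..n} \<rightarrow>\<^sub>E carrier H) \<times> carrier G"
  by (simp add: wreath_def)
lemma W_mult: "(h, g) \<otimes>\<^bsub>W\<^esub> (h', g') =
   ((\<lambda>i\<in>{1..n}. h i \<otimes>\<^bsub>H\<^esub> h' (\<tau> g i)), g \<otimes>\<^bsub>G\<^esub> g')"
  by (simp add: wreath_def)
lemma W_one: "\<one>\<^bsub>W\<^esub> = ((\<lambda>i\<in>{1..n}. \<one>\<^bsub>H\<^esub>), \<one>\<^bsub>G\<^esub>)"
  by (simp add: wreath_def)

lemma sig_perm: "g \<in> carrier G \<Longrightarrow> \<sigma> g permutes {1..n}"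
  using sh by (auto simp: hom_def sym_group_carrier)
lemma tau_perm: "g \<in> carrier G \<Longrightarrow> \<tau> g permutes {1..n}"
  by (rule permutes_inv[OF sig_perm])
lemma tau_in: "g \<in> carrier G \<Longrightarrow> i \<in> {1..n} \<Longrightarrow> \<tau> g i \<in> {1..n}"
  by (rule iffD2[OF permutes_in_image[OF tau_perm]])
lemma sig_mult: "g \<in> carrier G \<Longrightarrow> g' \<in> carrier G \<Longrightarrow> \<sigma> (g \<otimes>\<^bsub>G\<^esub> g') = \<sigma> g \<circ> \<sigma> g'"
  using sh by (simp add: hom_def sym_group_mult)
lemma tau_mult: "g \<in> carrier G \<Longrightarrow> g' \<in> carrier G \<Longrightarrow> \<tau> (g \<otimes>\<^bsub>G\<^esub> g') = \<tau> g' \<circ> \<tau> g"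
proof -
  assume g: "g \<in> carrier G" and g': "g' \<in> carrier G"
  show ?thesis unfolding sig_mult[OF g g']
    by (rule o_inv_distrib[OF permutes_bij[OF sig_perm[OF g]] permutes_bij[OF sig_perm[OF g']]])
qed
lemma sig_one: "\<sigma> \<one>\<^bsub>G\<^esub> = id"
proof -
  interpret group_hom G "sym_group n" \<sigma>
    using G sh sym_group_is_group by (simp add: group_hom_def group_hom_axioms_def)
  show ?thesis using hom_one by (simp add: sym_group_one)
qed
lemma tau_one: "\<tau> \<one>\<^bsub>G\<^esub> = id"
  by (simp add: sig_one inv_id)
lemma tau_inv: "g \<in> carrier G \<Longrightarrow> \<tau> (inv\<^bsub>G\<^esub> g) = \<sigma> g"
proof -
  assume g: "g \<in> carrier G"
  have "\<tau> (inv\<^bsub>G\<^esub> g) \<circ> \<tau> g = id" using tau_mult[of g "inv\<^bsub>G\<^esub> g"] g G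
    by (simp add: group.r_inv tau_one)
  then have "\<tau> (inv\<^bsub>G\<^esub> g) \<circ> \<tau> g \<circ> \<sigma> g = \<sigma> g" by simp
  moreover have "\<tau> g \<circ> \<sigma> g = id" by (rule permutes_inv_o(2)[OF sig_perm[OF g]])
  ultimately show ?thesis by (simp add: comp_assoc)
qed

lemma W_group: "group W"
proof (rule groupI)
  interpret H: group H by (rule H)
  interpret G: group G by (rule G)
  show "\<one>\<^bsub>W\<^esub> \<in> carrier W" by (auto simp: W_one W_carrier)
  fix x y z assume x: "x \<in> carrier W" and y: "y \<in> carrier W" and z: "z \<in> carrier W"
  obtain h g where xe: "x = (h, g)" by fastforce
  obtain h' g' where ye: "y = (h', g')" by fastforce
  obtain h'' g'' where ze: "z = (h'', g'')" by fastforce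
  note hs = x y z[unfolded xe ye ze W_carrier]
  show "x \<otimes>\<^bsub>W\<^esub> y \<in> carrier W" using hs tau_in
    by (auto simp: xe ye W_mult W_carrier PiE_def Pi_def)
  show "(x \<otimes>\<^bsub>W\<^esub> y) \<otimes>\<^bsub>W\<^esub> z = x \<otimes>\<^bsub>W\<^esub> (y \<otimes>\<^bsub>W\<^esub> z)"
    using hs tau_in
    by (auto simp: xe ye ze W_mult W_carrier PiE_def Pi_def tau_mult G.m_assoc H.m_assoc intro!: ext)
  show "\<one>\<^bsub>W\<^esub> \<otimes>\<^bsub>W\<^esub> x = x" using hs tau_one
    by (auto simp: xe W_one W_mult W_carrier PiE_def Pi_def extensional_def intro!: ext)
  show "\<exists>y\<in>carrier W. y \<otimes>\<^bsub>W\<^esub> x = \<one>\<^bsub>W\<^esub>"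
  proof (intro bexI)
    have gG: "g \<in> carrier G" and hH: "h \<in> {1..n} \<rightarrow>\<^sub>E carrier H"
      using x by (auto simp: xe W_carrier)
    have si: "\<And>i. i \<in> {1..n} \<Longrightarrow> \<sigma> g i \<in> {1..n}"
      by (rule iffD2[OF permutes_in_image[OF sig_perm[OF gG]]])
    have hi: "\<And>i. i \<in> {1..n} \<Longrightarrow> h (\<sigma> g i) \<in> carrier H"
      using si hH by (meson PiE_mem)
    show "((\<lambda>i\<in>{1..n}. inv\<^bsub>H\<^esub> h (\<sigma> g i)), inv\<^bsub>G\<^esub> g) \<otimes>\<^bsub>W\<^esub> x = \<one>\<^bsub>W\<^esub>"
      unfolding xe W_mult W_one tau_inv[OF gG]
    proof -
      have "(\<lambda>i\<in>{1..n}. (\<lambda>i\<in>{1..n}. inv\<^bsub>H\<^esub> h (\<sigma> g i)) i \<otimes>\<^bsub>H\<^esub> h (\<sigma> g i))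
            = (\<lambda>i\<in>{1..n}. \<one>\<^bsub>H\<^esub>)"
      proof (rule restrict_ext)
        fix i assume i: "i \<in> {1..n}"
        show "(\<lambda>i\<in>{1..n}. inv\<^bsub>H\<^esub> h (\<sigma> g i)) i \<otimes>\<^bsub>H\<^esub> h (\<sigma> g i) = \<one>\<^bsub>H\<^esub>"
          using i hi[OF i] by (simp only: restrict_apply' H.l_inv)
      qed
      then show "((\<lambda>i\<in>{1..n}. (\<lambda>i\<in>{1..n}. inv\<^bsub>H\<^esub> h (\<sigma> g i)) i \<otimes>\<^bsub>H\<^esub> h (\<sigma> g i)),
             inv\<^bsub>G\<^esub> g \<otimes>\<^bsub>G\<^esub> g) = ((\<lambda>i\<in>{1..n}. \<one>\<^bsub>H\<^esub>), \<one>\<^bsub>G\<^esub>)"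
        using gG by simp
    qed
    show "((\<lambda>i\<in>{1..n}. inv\<^bsub>H\<^esub> h (\<sigma> g i)), inv\<^bsub>G\<^esub> g) \<in> carrier W"
      using hi gG by (simp add: W_carrier)
  qed
qed

lemma proj_hom: "wr_proj \<in> hom W G"
  by (auto simp: hom_def W_carrier wreath_def wr_proj_def)

lemma proj_ghom: "group_hom W G wr_proj"
  using W_group G proj_hom by (simp add: group_hom_def group_hom_axioms_def)

lemma B_kernel: "base_group H G n = kernel W G wr_proj"
  using group.is_monoid[OF G] by (auto simp: base_group_def kernel_def W_carrier wr_proj_def)

lemma B_normal: "base_group H G n \<lhd> W"
  using group_hom.normal_kernel[OF proj_ghom] B_kernel by simp

lemma B_sub: "base_group H G n \<subseteq> carrier W"
  using group.is_monoid[OF G] by (auto simp: base_group_def W_carrier)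

lemma B_commute:
  assumes Hc: "comm_group H" and b: "b \<in> base_group H G n" and c: "c \<in> base_group H G n"
  shows "b \<otimes>\<^bsub>W\<^esub> c = c \<otimes>\<^bsub>W\<^esub> b"
proof -
  interpret Hc: comm_group H by (rule Hc)
  obtain h where bh: "b = (h, \<one>\<^bsub>G\<^esub>)" "h \<in> {1..n} \<rightarrow>\<^sub>E carrier H" using b by (auto simp: base_group_def)
  obtain h' where ch: "c = (h', \<one>\<^bsub>G\<^esub>)" "h' \<in> {1..n} \<rightarrow>\<^sub>E carrier H" using c by (auto simp: base_group_def)
  show ?thesis using bh ch tau_one Hc.m_comm
    by (auto simp: W_mult PiE_def Pi_def intro!: ext)
qed

lemma B_comm_group:
  assumes Hc: "comm_group H"
  shows "comm_group (W\<lparr>carrier := base_group H G n\<rparr>)"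
proof -
  have sg: "subgroup (base_group H G n) W" by (rule normal_imp_subgroup[OF B_normal])
  interpret gg: group "W\<lparr>carrier := base_group H G n\<rparr>"
    using subgroup.subgroup_is_group[OF sg W_group] .
  show ?thesis by (rule gg.group_comm_groupI) (use B_commute[OF Hc] in auto)
qed

lemma aut_B:
  assumes ab_normal: "\<And>N. N \<lhd> W \<Longrightarrow> comm_group (W\<lparr>carrier := N\<rparr>) \<Longrightarrow> N \<subseteq> base_group H G n"
    and Hc: "comm_group H"
    and phi: "\<phi> \<in> iso W W"
  shows "\<phi> ` base_group H G n \<subseteq> base_group H G n"
proof (rule ab_normal)
  interpret Wg: group W by (rule W_group)
  have gh: "group_hom W W \<phi>" using phi W_group
    by (simp add: group_hom_def group_hom_axioms_def iso_imp_homomorphism)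
  interpret ph: group_hom W W \<phi> by (rule gh)
  have sg: "subgroup (base_group H G n) W" by (rule normal_imp_subgroup[OF B_normal])
  have sgi: "subgroup (\<phi> ` base_group H G n) W"
    using subgroup.iso_subgroup[OF sg W_group W_group phi] .
  have surj: "\<phi> ` carrier W = carrier W" using phi by (simp add: iso_iff)
  show "\<phi> ` base_group H G n \<lhd> W"
  proof (rule Wg.normal_invI[OF sgi])
    fix x y assume x: "x \<in> carrier W" and y: "y \<in> \<phi> ` base_group H G n"
    have "x \<in> \<phi> ` carrier W" using x surj by simp
    then obtain x' where x': "x' \<in> carrier W" "x = \<phi> x'" by (rule imageE) simp
    obtain b where b: "b \<in> base_group H G n" "y = \<phi> b" using y by (rule imageE) simp
    have bW: "b \<in> carrier W" using subsetD[OF B_sub b(1)] .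
    have "x' \<otimes>\<^bsub>W\<^esub> b \<otimes>\<^bsub>W\<^esub> inv\<^bsub>W\<^esub> x' \<in> base_group H G n"
      by (rule Wg.normal_invE(2)[OF B_normal x'(1) b(1)])
    moreover have "\<phi> (x' \<otimes>\<^bsub>W\<^esub> b \<otimes>\<^bsub>W\<^esub> inv\<^bsub>W\<^esub> x') = x \<otimes>\<^bsub>W\<^esub> y \<otimes>\<^bsub>W\<^esub> inv\<^bsub>W\<^esub> x"
      using x' b bW by simp
    ultimately show "x \<otimes>\<^bsub>W\<^esub> y \<otimes>\<^bsub>W\<^esub> inv\<^bsub>W\<^esub> x \<in> \<phi> ` base_group H G n"
      by (metis imageI)
  qed
  interpret gg: group "W\<lparr>carrier := \<phi> ` base_group H G n\<rparr>"
    using subgroup.subgroup_is_group[OF sgi W_group] .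
  show "comm_group (W\<lparr>carrier := \<phi> ` base_group H G n\<rparr>)"
  proof (rule gg.group_comm_groupI)
    fix x y assume "x \<in> carrier (W\<lparr>carrier := \<phi> ` base_group H G n\<rparr>)"
      "y \<in> carrier (W\<lparr>carrier := \<phi> ` base_group H G n\<rparr>)"
    then obtain b c where bc: "b \<in> base_group H G n" "c \<in> base_group H G n" "x = \<phi> b" "y = \<phi> c"
      by auto
    have "b \<in> carrier W" "c \<in> carrier W" using bc B_sub by auto
    then show "x \<otimes>\<^bsub>W\<lparr>carrier := \<phi> ` base_group H G n\<rparr>\<^esub> y = y \<otimes>\<^bsub>W\<lparr>carrier := \<phi> ` base_group H G n\<rparr>\<^esub> x"
    proof -
      have "\<phi> b \<otimes>\<^bsub>W\<^esub> \<phi> c = \<phi> (b \<otimes>\<^bsub>W\<^esub> c)" using \<open>b \<in> carrier W\<close> \<open>c \<in> carrier W\<close>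
        by (rule ph.hom_mult[symmetric])
      also have "\<dots> = \<phi> (c \<otimes>\<^bsub>W\<^esub> b)" using B_commute[OF Hc bc(1,2)] by (rule arg_cong)
      also have "\<dots> = \<phi> c \<otimes>\<^bsub>W\<^esub> \<phi> b" using \<open>c \<in> carrier W\<close> \<open>b \<in> carrier W\<close>
        by (rule ph.hom_mult)
      finally show ?thesis using bc by simp
    qed
  qed
qed


abbreviation "P \<equiv> kernel G (sym_group n) \<sigma>"
abbreviation "PW \<equiv> wr_proj -` P \<inter> carrier W"

lemma PW_sub: "subgroup PW W"
proof -
  have h: "\<sigma> \<circ> wr_proj \<in> hom W (sym_group n)" using hom_compose[OF proj_hom sh] .
  have gh: "group_hom W (sym_group n) (\<sigma> \<circ> wr_proj)"
    using h W_group sym_group_is_group by (simp add: group_hom_def group_hom_axioms_def)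
  have "PW = kernel W (sym_group n) (\<sigma> \<circ> wr_proj)"
    by (auto simp: kernel_def W_carrier wr_proj_def)
  then show ?thesis using group_hom.subgroup_kernel[OF gh] by simp
qed

lemma PW_iso: "W\<lparr>carrier := PW\<rparr> \<cong> pow_group H n \<times>\<times> G\<lparr>carrier := P\<rparr>"
proof (rule is_isoI[of "\<lambda>x. x"], rule isoI)
  have car: "PW = ({1..n} \<rightarrow>\<^sub>E carrier H) \<times> P"
    by (auto simp: kernel_def W_carrier wr_proj_def)
  show "(\<lambda>x. x) \<in> hom (W\<lparr>carrier := PW\<rparr>) (pow_group H n \<times>\<times> G\<lparr>carrier := P\<rparr>)"
    unfolding hom_def
  proof (intro CollectI conjI ballI)
    show "(\<lambda>x. x) \<in> carrier (W\<lparr>carrier := PW\<rparr>) \<rightarrow> carrier (pow_group H n \<times>\<times> G\<lparr>carrier := P\<rparr>)"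
      using car by (auto simp: pow_group_def)
    fix x y assume "x \<in> carrier (W\<lparr>carrier := PW\<rparr>)" "y \<in> carrier (W\<lparr>carrier := PW\<rparr>)"
    then obtain h g h' g' where xy: "x = (h, g)" "y = (h', g')" "g \<in> P" "g' \<in> P"
      by (cases x, cases y) (auto simp: wr_proj_def)
    have "\<tau> g = id" using xy by (simp add: kernel_def sym_group_one inv_id)
    then show "x \<otimes>\<^bsub>W\<lparr>carrier := PW\<rparr>\<^esub> y = x \<otimes>\<^bsub>pow_group H n \<times>\<times> G\<lparr>carrier := P\<rparr>\<^esub> y"
      using xy by (simp add: wreath_def DirProd_def pow_group_def)
  qed
  show "bij_betw (\<lambda>x. x) (carrier (W\<lparr>carrier := PW\<rparr>)) (carrier (pow_group H n \<times>\<times> G\<lparr>carrier := P\<rparr>))"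
    using car by (simp add: pow_group_def bij_betw_def)
qed

lemma char_PW:
  assumes ab_normal: "\<And>N. N \<lhd> W \<Longrightarrow> comm_group (W\<lparr>carrier := N\<rparr>) \<Longrightarrow> N \<subseteq> base_group H G n"
    and Hc: "comm_group H"
    and P_char: "characteristic G P"
  shows "characteristic W PW"
  unfolding characteristic_def
proof (intro conjI ballI)
  show "subgroup PW W" by (rule PW_sub)
  fix \<phi> assume phi: "\<phi> \<in> iso W W"
  interpret Wg: group W by (rule W_group)
  interpret Gg: group G by (rule G)
  interpret Hg: group H by (rule H)
  have gh: "group_hom W W \<phi>" using phi W_group
    by (simp add: group_hom_def group_hom_axioms_def iso_imp_homomorphism)
  interpret ph: group_hom W W \<phi> by (rule gh)
  interpret pr: group_hom W G wr_proj by (rule proj_ghom)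
  define \<phi>' where "\<phi>' = inv_into (carrier W) \<phi>"
  have phi': "\<phi>' \<in> iso W W" using Wg.iso_set_sym[OF phi] by (simp add: \<phi>'_def)
  have BB: "\<phi> ` base_group H G n \<subseteq> base_group H G n" by (rule aut_B[OF ab_normal Hc phi])
  have BB': "\<phi>' ` base_group H G n \<subseteq> base_group H G n" by (rule aut_B[OF ab_normal Hc phi'])
  have inj: "inj_on \<phi> (carrier W)" and surj: "\<phi> ` carrier W = carrier W"
    using phi by (auto simp: iso_iff)
  have inv1: "\<And>w. w \<in> carrier W \<Longrightarrow> \<phi>' (\<phi> w) = w"
    using inj by (simp add: \<phi>'_def)
  have inv2: "\<And>w. w \<in> carrier W \<Longrightarrow> \<phi> (\<phi>' w) = w"
    using surj by (metis \<phi>'_def f_inv_into_f)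
  have inv3: "\<And>w. w \<in> carrier W \<Longrightarrow> \<phi>' w \<in> carrier W"
    by (rule hom_in_carrier[OF iso_imp_homomorphism[OF phi']])
  define e where "e = (\<lambda>g::'g. ((\<lambda>i\<in>{1..n}. \<one>\<^bsub>H\<^esub>), g))"
  have e_car: "\<And>g. g \<in> carrier G \<Longrightarrow> e g \<in> carrier W"
    by (auto simp: e_def W_carrier)
  have e_hom: "e \<in> hom G W"
    unfolding hom_def
  proof (intro CollectI conjI ballI)
    show "e \<in> carrier G \<rightarrow> carrier W" using e_car by auto
    fix g g' assume "g \<in> carrier G" "g' \<in> carrier G"
    then show "e (g \<otimes>\<^bsub>G\<^esub> g') = e g \<otimes>\<^bsub>W\<^esub> e g'"
      using tau_in by (auto simp: e_def W_mult intro!: ext)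
  qed
  define \<psi> where "\<psi> = wr_proj \<circ> \<phi> \<circ> e"
  have psi_hom: "\<psi> \<in> hom G G" unfolding \<psi>_def
    using hom_compose[OF hom_compose[OF e_hom iso_imp_homomorphism[OF phi]] proj_hom]
    by (simp add: comp_assoc)
  interpret ps: group_hom G G \<psi> using psi_hom G by (simp add: group_hom_def group_hom_axioms_def)
  have key: "\<And>w. w \<in> carrier W \<Longrightarrow> wr_proj (\<phi> w) = \<psi> (wr_proj w)"
  proof -
    fix w assume w: "w \<in> carrier W"
    obtain h g where hg: "w = (h, g)" "h \<in> {1..n} \<rightarrow>\<^sub>E carrier H" "g \<in> carrier G"
      using w by (auto simp: W_carrier)
    have b: "(h, \<one>\<^bsub>G\<^esub>) \<in> base_group H G n" using hg by (simp add: base_group_def)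
    have bW: "(h, \<one>\<^bsub>G\<^esub>) \<in> carrier W" using hg by (simp add: W_carrier)
    have dec: "w = (h, \<one>\<^bsub>G\<^esub>) \<otimes>\<^bsub>W\<^esub> e g"
      using hg tau_one by (auto simp: e_def W_mult PiE_def Pi_def extensional_def intro!: ext)
    have "\<phi> (h, \<one>\<^bsub>G\<^esub>) \<in> base_group H G n" using subsetD[OF BB imageI[OF b]] .
    then have p1: "wr_proj (\<phi> (h, \<one>\<^bsub>G\<^esub>)) = \<one>\<^bsub>G\<^esub>" by (auto simp: base_group_def wr_proj_def)
    have "wr_proj (\<phi> w) = wr_proj (\<phi> (h, \<one>\<^bsub>G\<^esub>)) \<otimes>\<^bsub>G\<^esub> wr_proj (\<phi> (e g))"
      using dec bW e_car[OF hg(3)] by simp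
    also have "\<dots> = \<psi> g" using p1 e_car[OF hg(3)] by (simp add: \<psi>_def)
    finally show "wr_proj (\<phi> w) = \<psi> (wr_proj w)" using hg by (simp add: wr_proj_def)
  qed
  have psi_inj: "inj_on \<psi> (carrier G)"
  proof (rule ps.trivial_ker_imp_inj)
    show "kernel G G \<psi> = {\<one>\<^bsub>G\<^esub>}"
    proof
      show "{\<one>\<^bsub>G\<^esub>} \<subseteq> kernel G G \<psi>" by (simp add: kernel_def)
      show "kernel G G \<psi> \<subseteq> {\<one>\<^bsub>G\<^esub>}"
      proof
        fix g assume "g \<in> kernel G G \<psi>"
        then have g: "g \<in> carrier G" "\<psi> g = \<one>\<^bsub>G\<^esub>" by (auto simp: kernel_def)
        have "\<phi> (e g) \<in> carrier W" using e_car[OF g(1)] by simp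
        then have "\<phi> (e g) \<in> base_group H G n"
          using g by (auto simp: \<psi>_def wr_proj_def base_group_def W_carrier)
        then have "\<phi>' (\<phi> (e g)) \<in> base_group H G n" by (rule subsetD[OF BB' imageI])
        then have "e g \<in> base_group H G n" using inv1 e_car[OF g(1)] by simp
        then show "g \<in> {\<one>\<^bsub>G\<^esub>}" by (simp add: e_def base_group_def)
      qed
    qed
  qed
  have psi_surj: "\<psi> ` carrier G = carrier G"
  proof
    show "\<psi> ` carrier G \<subseteq> carrier G" by auto
    show "carrier G \<subseteq> \<psi> ` carrier G"
    proof
      fix g' assume g': "g' \<in> carrier G"
      define w where "w = \<phi>' (e g')"
      have w: "w \<in> carrier W" using inv3 e_car[OF g'] by (simp add: w_def)
      have "\<phi> w = e g'" using inv2 e_car[OF g'] by (simp add: w_def)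
      then have "g' = \<psi> (wr_proj w)" using key[OF w] by (simp add: e_def wr_proj_def)
      moreover have "wr_proj w \<in> carrier G" using w by (simp add: W_carrier wr_proj_def mem_Times_iff)
      ultimately show "g' \<in> \<psi> ` carrier G" by (rule image_eqI)
    qed
  qed
  have psi_iso: "\<psi> \<in> iso G G" using psi_hom psi_inj psi_surj by (simp add: iso_iff)
  have PP: "\<psi> ` P = P" using P_char psi_iso by (simp add: characteristic_def)
  have Psub: "P \<subseteq> carrier G" by (auto simp: kernel_def)
  have projW: "\<And>w. w \<in> carrier W \<Longrightarrow> wr_proj w \<in> carrier G"
    by (auto simp: W_carrier wr_proj_def)
  show "\<phi> ` PW = PW"
  proof
    show "\<phi> ` PW \<subseteq> PW"
    proof
      fix y assume "y \<in> \<phi> ` PW"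
      then obtain w where w: "w \<in> carrier W" "wr_proj w \<in> P" "y = \<phi> w" by auto
      have "wr_proj y = \<psi> (wr_proj w)" using key[OF w(1)] w(3) by simp
      moreover have "\<psi> (wr_proj w) \<in> P" using imageI[of "wr_proj w" P \<psi>] w(2) PP by simp
      ultimately have "wr_proj y \<in> P" by simp
      then show "y \<in> PW" using w by simp
    qed
    show "PW \<subseteq> \<phi> ` PW"
    proof
      fix y assume y: "y \<in> PW"
      then have "y \<in> \<phi> ` carrier W" using surj by simp
      then obtain w where w: "w \<in> carrier W" "y = \<phi> w" by (rule imageE) simp
      have "\<psi> (wr_proj w) \<in> P" using key[OF w(1)] w y by simp
      then obtain p where p: "p \<in> P" "\<psi> p = \<psi> (wr_proj w)" using PP by (metis imageE)
      have "p = wr_proj w" using inj_onD[OF psi_inj p(2)] p(1) Psub projW[OF w(1)] by auto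
      then have "w \<in> PW" using w p by simp
      then show "y \<in> \<phi> ` PW" using w(2) by simp
    qed
  qed
qed

end
theorem theorem3p17:
  fixes H :: "('h, 'a) monoid_scheme" and G :: "('g, 'b) monoid_scheme"
    and n :: nat and \<sigma> :: "'g \<Rightarrow> nat \<Rightarrow> nat"
  assumes n3: "n \<ge> 3"
    and H_ab: "comm_group H"
    and H_fg: "fin_gen_group H"
    and H_nontriv: "carrier H \<noteq> {\<one>\<^bsub>H\<^esub>}"
    and G_grp: "group G"
    and \<sigma>_hom: "\<sigma> \<in> hom G (sym_group n)"
    and \<sigma>_surj: "\<sigma> ` carrier G = carrier (sym_group n)"
    and ab_normal: "\<And>N. N \<lhd> wreath H G n \<sigma> \<Longrightarrow>
                       comm_group ((wreath H G n \<sigma>)\<lparr>carrier := N\<rparr>) \<Longrightarrow>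
                       N \<subseteq> base_group H G n"
    and P_char: "characteristic G (kernel G (sym_group n) \<sigma>)"
  shows "(wreath H G n \<sigma>)\<lparr>carrier := wr_proj -` (kernel G (sym_group n) \<sigma>) \<inter> carrier (wreath H G n \<sigma>)\<rparr>
           \<cong> pow_group H n \<times>\<times> G\<lparr>carrier := kernel G (sym_group n) \<sigma>\<rparr>
       \<and> characteristic (wreath H G n \<sigma>)
           (wr_proj -` (kernel G (sym_group n) \<sigma>) \<inter> carrier (wreath H G n \<sigma>))"
proof -
  interpret Hc: comm_group H by (rule H_ab)
  interpret w: wr H G n \<sigma>
    using Hc.is_group G_grp \<sigma>_hom by (simp add: wr_def)
  show ?thesis by (rule conjI[OF w.PW_iso w.char_PW[OF ab_normal H_ab P_char]])
qed

end
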